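(* Let $d\ge 3$ and $n\ge 3$. In $(\mathbb{C}^d)^{\otimes n}$ consider the following $n(d-1)+1$ product states. For $i=1,\dots,d-1$: $$|\phi_i\rangle=|0-i\rangle_1|0\rangle_2\cdots|0\rangle_{n-1}|i\rangle_n,$$ and for $k=1,\dots,n-1$ and $i=1,\dots,d-1$: $$|\phi_{i+k(d-1)}\rangle=|i\rangle_k|0-i\rangle_{k+1}\otimes\bigotimes_{l\notin\{k,k+1\}}|0\rangle_l,$$ together with the stopper state $|\phi_{n(d-1)+1}\rangle=\bigotimes_{l=1}^n|0+1+\cdots+(d-1)\rangle_l$. These states are pairwise orthogonal, and for every party $t\in\{1,\dots,n\}$, every orthogonality-preserving local POVM element $E_t$ on party $t$ for this set is proportional to the identity. Consequently, this set cannot be perfectly distinguished by LOCC.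
   Context: $\{|i\rangle\}$ is the computational basis; $|i_1\pm i_2\pm\cdots\pm i_r\rangle$ denotes $\frac{1}{\sqrt r}(|i_1\rangle\pm|i_2\rangle\pm\cdots\pm|i_r\rangle)$; subscripts indicate the party. For a set $\{|\psi_a\rangle\}$ of pairwise orthogonal states in $\mathbb{C}^{d_1}\otimes\cdots\otimes\mathbb{C}^{d_n}$, a positive semidefinite operator $E_t$ on $\mathbb{C}^{d_t}$ (a POVM element $M_t^\dagger M_t$ of a measurement by party $t$) is called orthogonality-preserving if $\langle\psi_a|(\mathbb{I}\otimes\cdots\otimes E_t\otimes\cdots\otimes\mathbb{I})|\psi_b\rangle=0$ for all $a\neq b$; the measurement is trivial if all its POVM elements are proportional to the identity. A set of orthogonal states for which every party can only perform trivial orthogonality-preserving measurements cannot be perfectly distinguished by LOCC. *)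

theory Defs
  imports Complex_Main "HOL-Library.FuncSet"
begin

text \<open>Local vectors in C^d are functions nat => complex (components 0..d-1);
local operators on C^d are functions nat => nat => complex (entries (i,j), i,j < d).
Parties are numbered 1..n. A state in (C^d)^{\<otimes> n} is a function assigning an
amplitude to every basis multi-index j in PiE {1..n} (\<lambda>_. {..<d}).\<close>

definition ket :: "nat \<Rightarrow> nat \<Rightarrow> complex" where
  "ket i = (\<lambda>j. if j = i then 1 else 0)"

definition ket_minus :: "nat \<Rightarrow> nat \<Rightarrow> complex" where
  "ket_minus i = (\<lambda>j. (ket 0 j - ket i j) / complex_of_real (sqrt 2))"

definition ket_uniform :: "nat \<Rightarrow> nat \<Rightarrow> complex" where
  "ket_uniform d = (\<lambda>j. (\<Sum>i<d. ket i j) / complex_of_real (sqrt (real d)))"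

definition basis_idx :: "nat \<Rightarrow> nat \<Rightarrow> (nat \<Rightarrow> nat) set" where
  "basis_idx d n = PiE {1..n} (\<lambda>_. {..<d})"

definition prod_state :: "nat \<Rightarrow> (nat \<Rightarrow> nat \<Rightarrow> complex) \<Rightarrow> (nat \<Rightarrow> nat) \<Rightarrow> complex" where
  "prod_state n a = (\<lambda>j. \<Prod>l\<in>{1..n}. a l (j l))"

definition ip :: "nat \<Rightarrow> nat \<Rightarrow> ((nat \<Rightarrow> nat) \<Rightarrow> complex) \<Rightarrow> ((nat \<Rightarrow> nat) \<Rightarrow> complex) \<Rightarrow> complex" where
  "ip d n psi phi = (\<Sum>j\<in>basis_idx d n. cnj (psi j) * phi j)"

text \<open>The operator I \<otimes> ... \<otimes> E (at party t) \<otimes> ... \<otimes> I\<close>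
definition loc_op :: "nat \<Rightarrow> nat \<Rightarrow> (nat \<Rightarrow> nat \<Rightarrow> complex) \<Rightarrow> ((nat \<Rightarrow> nat) \<Rightarrow> complex) \<Rightarrow> (nat \<Rightarrow> nat) \<Rightarrow> complex" where
  "loc_op d t E psi = (\<lambda>j. \<Sum>k<d. E (j t) k * psi (j(t := k)))"

definition psd :: "nat \<Rightarrow> (nat \<Rightarrow> nat \<Rightarrow> complex) \<Rightarrow> bool" where
  "psd d E \<longleftrightarrow> (\<forall>v :: nat \<Rightarrow> complex.
      (\<Sum>i<d. \<Sum>k<d. cnj (v i) * E i k * v k) \<in> \<real> \<and>
      Re (\<Sum>i<d. \<Sum>k<d. cnj (v i) * E i k * v k) \<ge> 0)"

definition prop_identity :: "nat \<Rightarrow> (nat \<Rightarrow> nat \<Rightarrow> complex) \<Rightarrow> bool" where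
  "prop_identity d E \<longleftrightarrow> (\<exists>c. \<forall>i<d. \<forall>k<d. E i k = (if i = k then c else 0))"

text \<open>Local factor at party l of the state phi_a, a = 1..n(d-1)+1.
 a = i (1 \<le> i \<le> d-1): |0-i>_1 |0>_2 ... |0>_{n-1} |i>_n;
 a = i + k(d-1) (1 \<le> k \<le> n-1, 1 \<le> i \<le> d-1): |i>_k |0-i>_{k+1}, |0> elsewhere;
 a = n(d-1)+1: stopper state.\<close>
definition phi_loc :: "nat \<Rightarrow> nat \<Rightarrow> nat \<Rightarrow> nat \<Rightarrow> nat \<Rightarrow> complex" where
  "phi_loc d n a l =
     (if a \<le> d - 1 then
        (if l = 1 then ket_minus a else if l = n then ket a else ket 0)
      else if a \<le> n * (d - 1) then
        (let k = (a - 1) div (d - 1); i = (a - 1) mod (d - 1) + 1 in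
          if l = k then ket i else if l = k + 1 then ket_minus i else ket 0)
      else ket_uniform d)"

definition phi :: "nat \<Rightarrow> nat \<Rightarrow> nat \<Rightarrow> (nat \<Rightarrow> nat) \<Rightarrow> complex" where
  "phi d n a = prod_state n (phi_loc d n a)"

definition orth_preserving :: "nat \<Rightarrow> nat \<Rightarrow> nat \<Rightarrow> (nat \<Rightarrow> nat \<Rightarrow> complex) \<Rightarrow> bool" where
  "orth_preserving d n t E \<longleftrightarrow>
     (\<forall>a\<in>{1..n*(d-1)+1}. \<forall>b\<in>{1..n*(d-1)+1}. a \<noteq> b \<longrightarrow>
        ip d n (phi d n a) (loc_op d t E (phi d n b)) = 0)"

end

theory Submission
  imports Defs
begin

definition lip :: "nat \<Rightarrow> (nat \<Rightarrow> complex) \<Rightarrow> (nat \<Rightarrow> complex) \<Rightarrow> complex" where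
 "lip d x y = (\<Sum>m<d. cnj (x m) * y m)"
definition melt :: "nat \<Rightarrow> (nat\<Rightarrow>nat\<Rightarrow>complex) \<Rightarrow> (nat \<Rightarrow> complex) \<Rightarrow> (nat \<Rightarrow> complex) \<Rightarrow> complex" where
 "melt d E x y = (\<Sum>p<d. \<Sum>q<d. cnj (x p) * E p q * y q)"

lemma ip_prod: "ip d n (prod_state n a) (prod_state n b) = (\<Prod>l\<in>{1..n}. lip d (a l) (b l))"
  unfolding ip_def basis_idx_def prod_state_def lip_def
  by (simp add: prod_sum_PiE cnj_prod prod.distrib[symmetric])

lemma ip_loc:
  assumes t: "t \<in> {1..n}"
  shows "ip d n (prod_state n a) (loc_op d t E (prod_state n b)) =
     (\<Prod>l\<in>{1..n}-{t}. lip d (a l) (b l)) * melt d E (a t) (b t)"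
proof -
  define g where "g l x = (if l = t then cnj (a t x) * (\<Sum>k<d. E x k * b t k) else cnj (a l x) * b l x)" for l x
  have fin: "finite {1..n}" by simp
  have 1: "cnj (prod_state n a j) * loc_op d t E (prod_state n b) j = (\<Prod>l\<in>{1..n}. g l (j l))" for j
  proof -
    have pc: "(\<Prod>l\<in>{1..n}-{t}. b l ((j(t:=k)) l)) = (\<Prod>l\<in>{1..n}-{t}. b l (j l))" for k
      by (rule prod.cong) auto
    have A: "loc_op d t E (prod_state n b) j = (\<Sum>k<d. E (j t) k * b t k) * (\<Prod>l\<in>{1..n}-{t}. b l (j l))"
    proof -
      have pk: "(\<Prod>l\<in>{1..n}. b l ((j(t:=k)) l)) = b t k * (\<Prod>l\<in>{1..n}-{t}. b l (j l))" for k
        using prod.remove[OF fin t, of "\<lambda>l. b l ((j(t:=k)) l)"] pc[of k] by simp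
      show ?thesis unfolding loc_op_def prod_state_def pk sum_distrib_right
        by (simp add: mult_ac)
    qed
    have B: "(\<Prod>l\<in>{1..n}. g l (j l)) = g t (j t) * (\<Prod>l\<in>{1..n}-{t}. g l (j l))"
      by (rule prod.remove[OF fin t])
    have C: "(\<Prod>l\<in>{1..n}-{t}. g l (j l)) = (\<Prod>l\<in>{1..n}-{t}. cnj (a l (j l))) * (\<Prod>l\<in>{1..n}-{t}. b l (j l))"
      unfolding prod.distrib[symmetric] by (rule prod.cong) (auto simp: g_def)
    have D: "cnj (prod_state n a j) = cnj (a t (j t)) * (\<Prod>l\<in>{1..n}-{t}. cnj (a l (j l)))"
      unfolding prod_state_def cnj_prod by (rule prod.remove[OF fin t])
    show ?thesis using A B C D by (simp add: g_def mult_ac)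
  qed
  have "ip d n (prod_state n a) (loc_op d t E (prod_state n b)) = (\<Sum>j\<in>basis_idx d n. \<Prod>l\<in>{1..n}. g l (j l))"
    unfolding ip_def using 1 by simp
  also have "\<dots> = (\<Prod>l\<in>{1..n}. \<Sum>x<d. g l x)"
    unfolding basis_idx_def by (rule prod_sum_PiE[symmetric]) auto
  also have "\<dots> = (\<Sum>x<d. g t x) * (\<Prod>l\<in>{1..n}-{t}. \<Sum>x<d. g l x)"
    by (rule prod.remove[OF fin t])
  also have "(\<Sum>x<d. g t x) = melt d E (a t) (b t)"
    unfolding melt_def g_def by (simp add: sum_distrib_left mult_ac)
  also have "(\<Prod>l\<in>{1..n}-{t}. \<Sum>x<d. g l x) = (\<Prod>l\<in>{1..n}-{t}. lip d (a l) (b l))"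
    unfolding lip_def by (rule prod.cong) (auto simp: g_def)
  finally show ?thesis by (simp add: mult_ac)
qed

lemma lip_ket: "lip d x (ket j) = (if j < d then cnj (x j) else 0)"
  unfolding lip_def ket_def by (simp add: if_distrib cong: if_cong)

lemma lip_minus: "lip d x (ket_minus j) = (lip d x (ket 0) - lip d x (ket j)) / complex_of_real (sqrt 2)"
  unfolding lip_def ket_minus_def by (simp add: sum_subtractf sum_divide_distrib right_diff_distrib diff_divide_distrib)

lemma lip_unif: "lip d x (ket_uniform d) = (\<Sum>m<d. cnj (x m)) / complex_of_real (sqrt (real d))"
  unfolding lip_def ket_uniform_def ket_def by (simp add: sum_divide_distrib)

lemma lip_sym: "lip d y x = cnj (lip d x y)"
  unfolding lip_def by (simp add: mult.commute)


lemma ket_apply: "ket i j = (if j = i then 1 else 0)"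
  by (simp add: ket_def)

lemma sqrt2c: "complex_of_real (sqrt 2) * complex_of_real (sqrt 2) = 2"
  by (simp flip: of_real_mult)

lemma V_kk: "i < d \<Longrightarrow> j < d \<Longrightarrow> lip d (ket i) (ket j) = (if i = j then 1 else 0)"
  by (simp add: lip_ket ket_apply)

lemma V_km: "i < d \<Longrightarrow> j < d \<Longrightarrow> lip d (ket i) (ket_minus j) =
   ((if i = 0 then 1 else 0) - (if i = j then 1 else 0)) / complex_of_real (sqrt 2)"
  by (simp add: lip_minus V_kk)

lemma V_mk: "i < d \<Longrightarrow> j < d \<Longrightarrow> lip d (ket_minus i) (ket j) =
   ((if j = 0 then 1 else 0) - (if i = j then 1 else 0)) / complex_of_real (sqrt 2)"
  by (subst lip_sym) (auto simp: V_km)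

lemma V_mm: "0 < i \<Longrightarrow> i < d \<Longrightarrow> 0 < j \<Longrightarrow> j < d \<Longrightarrow>
   lip d (ket_minus i) (ket_minus j) = (if i = j then 1 else 1/2)"
  by (simp add: lip_minus V_mk sqrt2c)

lemma sum_ket: "i < d \<Longrightarrow> (\<Sum>m<d. cnj (ket i m)) = 1"
  by (simp add: ket_def if_distrib cong: if_cong)

lemma V_ku: "i < d \<Longrightarrow> lip d (ket i) (ket_uniform d) = 1 / complex_of_real (sqrt (real d))"
  by (simp add: lip_unif sum_ket)

lemma V_mu: "0 < i \<Longrightarrow> i < d \<Longrightarrow> lip d (ket_minus i) (ket_uniform d) = 0"
  by (simp add: lip_unif ket_minus_def sum_divide_distrib[symmetric] sum_subtractf sum_ket)

lemma V_uk: "i < d \<Longrightarrow> lip d (ket_uniform d) (ket i) = 1 / complex_of_real (sqrt (real d))"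
  by (subst lip_sym) (simp add: V_ku)

lemma V_um: "0 < i \<Longrightarrow> i < d \<Longrightarrow> lip d (ket_uniform d) (ket_minus i) = 0"
  by (subst lip_sym) (simp add: V_mu)

lemma melt_alt: "melt d E x y = (\<Sum>p<d. cnj (x p) * (\<Sum>q<d. E p q * y q))"
  unfolding melt_def by (simp add: sum_distrib_left mult_ac)

lemma sum_ket_right: "j < d \<Longrightarrow> (\<Sum>q<d. f q * ket j q) = f j"
  by (simp add: ket_apply if_distrib cong: if_cong)

lemma cnj_ket: "cnj (ket j q) = ket j q"
  by (simp add: ket_apply)

lemma sum_ket_left: "j < d \<Longrightarrow> (\<Sum>q<d. cnj (ket j q) * f q) = f j"
proof -
  assume j: "j < d"
  have "(\<Sum>q<d. cnj (ket j q) * f q) = (\<Sum>q<d. f q * ket j q)" by (simp add: cnj_ket mult.commute)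
  then show ?thesis using sum_ket_right[OF j] by simp
qed

lemma sum_minus_right: "j < d \<Longrightarrow> (\<Sum>q<d. f q * ket_minus j q) = (f 0 - f j) / complex_of_real (sqrt 2)"
proof -
  assume j: "j < d"
  have "(\<Sum>q<d. f q * ket_minus j q) = (\<Sum>q<d. f q * ket 0 q - f q * ket j q) / complex_of_real (sqrt 2)"
    unfolding ket_minus_def sum_divide_distrib by (simp add: right_diff_distrib)
  also have "\<dots> = (f 0 - f j) / complex_of_real (sqrt 2)"
    using j by (simp add: sum_subtractf sum_ket_right)
  finally show ?thesis .
qed

lemma melt_kk: "i < d \<Longrightarrow> j < d \<Longrightarrow> melt d E (ket i) (ket j) = E i j"
  by (simp add: melt_alt sum_ket_right sum_ket_left)

lemma melt_um: "j < d \<Longrightarrow> melt d E (ket_uniform d) (ket_minus j) =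
   (\<Sum>p<d. E p 0 - E p j) / (complex_of_real (sqrt (real d)) * complex_of_real (sqrt 2))"
proof -
  assume j: "j < d"
  have "melt d E (ket_uniform d) (ket_minus j) = (\<Sum>p<d. (E p 0 - E p j) / (complex_of_real (sqrt (real d)) * complex_of_real (sqrt 2)))"
    unfolding melt_alt
  proof (rule sum.cong)
    fix p assume p: "p \<in> {..<d}"
    have "cnj (ket_uniform d p) = 1 / complex_of_real (sqrt (real d))"
      using p unfolding ket_uniform_def ket_apply by (simp add: if_distrib cong: if_cong)
    then show "cnj (ket_uniform d p) * (\<Sum>q<d. E p q * ket_minus j q) =
       (E p 0 - E p j) / (complex_of_real (sqrt (real d)) * complex_of_real (sqrt 2))"
      using j by (simp add: sum_minus_right[OF j, of "E p"])
  qed simp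
  then show ?thesis by (simp add: sum_divide_distrib)
qed

lemma phi_loc_A: "1 \<le> i \<Longrightarrow> i \<le> d - 1 \<Longrightarrow>
  phi_loc d n i = (\<lambda>l. if l = 1 then ket_minus i else if l = n then ket i else ket 0)"
  unfolding phi_loc_def by (rule ext) simp

lemma phi_loc_B: assumes "1 \<le> k" "k \<le> n - 1" "1 \<le> i" "i \<le> d - 1"
  shows "phi_loc d n (i + k*(d-1)) = (\<lambda>l. if l = k then ket i else if l = k+1 then ket_minus i else ket 0)"
proof -
  have e: "i + k*(d-1) - 1 = (i - 1) + k*(d-1)" using assms by simp
  have d0: "d - 1 \<noteq> 0" using assms by simp
  have lt: "i - 1 < d - 1" using assms by simp
  have dv: "(i + k*(d-1) - 1) div (d-1) = k" 
  proof -
    have "(i + k*(d-1) - 1) div (d-1) = ((i-1) + k*(d-1)) div (d-1)" using e by simp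
    also have "\<dots> = (i-1) div (d-1) + k" using d0 by simp
    finally show ?thesis using lt by simp
  qed
  have md: "(i + k*(d-1) - 1) mod (d-1) + 1 = i"
  proof -
    have "(i + k*(d-1) - 1) mod (d-1) = ((i-1) + k*(d-1)) mod (d-1)" using e by simp
    also have "\<dots> = (i-1)" using lt by simp
    finally show ?thesis using assms by simp
  qed
  have g: "\<not> i + k*(d-1) \<le> d - 1" 
  proof -
    have "1*(d-1) \<le> k*(d-1)" using assms by (intro mult_le_mono1) simp
    then show ?thesis using assms by linarith
  qed
  have h: "i + k*(d-1) \<le> n*(d-1)"
  proof -
    have "i + k*(d-1) \<le> (k+1)*(d-1)" using assms by simp
    also have "\<dots> \<le> n*(d-1)" using assms by (intro mult_le_mono1) simp
    finally show ?thesis .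
  qed
  show ?thesis unfolding phi_loc_def Let_def dv md using g h by (intro ext) simp
qed

lemma phi_loc_S: assumes "d \<ge> 2" "n \<ge> 1" shows "phi_loc d n (n*(d-1)+1) = (\<lambda>l. ket_uniform d)"
proof -
  have "1*(d-1) \<le> n*(d-1)" using assms by (intro mult_le_mono1) simp
  then have h: "\<not> n*(d-1)+1 \<le> d-1" "\<not> n*(d-1)+1 \<le> n*(d-1)" by linarith+
  show ?thesis unfolding phi_loc_def using h by (intro ext) (simp only: if_False)
qed

lemma classify: fixes d n a :: nat assumes "d \<ge> 2" "a \<in> {1..n*(d-1)+1}"
  shows "(1 \<le> a \<and> a \<le> d-1) \<or> (\<exists>k i. 1\<le>k \<and> k\<le>n-1 \<and> 1\<le>i \<and> i\<le>d-1 \<and> a = i + k*(d-1)) \<or> a = n*(d-1)+1"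
proof -
  have "a \<le> d - 1 \<or> (d - 1 < a \<and> a \<le> n*(d-1)) \<or> a = n*(d-1)+1" using assms by auto
  then consider "a \<le> d - 1" | "d - 1 < a" "a \<le> n*(d-1)" | "a = n*(d-1)+1" by blast
  then show ?thesis
  proof cases
    case 1 then show ?thesis using assms by auto
  next
    case 2
    define k where "k = (a-1) div (d-1)"
    define i where "i = (a-1) mod (d-1) + 1"
    have dp: "d - 1 > 0" using assms by simp
    have k1: "1 \<le> k" 
    proof -
      have "(d-1) div (d-1) \<le> (a-1) div (d-1)" using 2 by (intro div_le_mono) linarith
      then show ?thesis unfolding k_def using dp by simp
    qed
    have "a - 1 < n*(d-1)" using 2 by simp
    then have "k < n" unfolding k_def using dp by (simp add: div_less_iff_less_mult)
    moreover have "i \<le> d - 1" unfolding i_def using mod_less_divisor[OF dp, of "a-1"] by linarith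
    moreover have "a = i + k*(d-1)" unfolding i_def k_def using 2 dp mod_div_mult_eq[of "a-1" "d-1"] by linarith
    ultimately show ?thesis using k1 unfolding i_def by (intro disjI2 disjI1) (rule exI[of _ k], auto)
  next
    case 3 then show ?thesis by simp
  qed
qed

lemma melt_add_left: "melt d E (\<lambda>m. x m + c * y m) z = melt d E x z + cnj c * melt d E y z"
  unfolding melt_def by (simp add: algebra_simps sum.distrib sum_distrib_left)

lemma melt_add_right: "melt d E z (\<lambda>m. x m + c * y m) = melt d E z x + c * melt d E z y"
  unfolding melt_def by (simp add: algebra_simps sum.distrib sum_distrib_left)

lemma psd_herm: assumes "psd d E" "p < d" "q < d" shows "E q p = cnj (E p q)"
proof -
  have R: "Im (melt d E v v) = 0" for v
    using assms(1) unfolding psd_def melt_def by (simp add: complex_is_Real_iff)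
  have pp: "Im (E p p) = 0" "Im (E q q) = 0" using R[of "ket p"] R[of "ket q"] assms by (simp_all add: melt_kk)
  have e: "melt d E (\<lambda>m. ket p m + c * ket q m) (\<lambda>m. ket p m + c * ket q m)
      = E p p + c * E p q + cnj c * E q p + cnj c * c * E q q" for c
    using assms by (simp add: melt_add_left melt_add_right melt_kk algebra_simps)
  have 1: "Im (E p q) + Im (E q p) = 0" using R[of "\<lambda>m. ket p m + 1 * ket q m"] pp unfolding e by simp
  have 2: "Re (E p q) - Re (E q p) = 0" using R[of "\<lambda>m. ket p m + \<i> * ket q m"] pp unfolding e by simp
  show ?thesis using 1 2 by (intro complex_eqI) simp_all
qed

lemma ip_phi_zero: assumes "\<exists>l\<in>{1..n}. lip d (phi_loc d n a l) (phi_loc d n b l) = 0"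
  shows "ip d n (phi d n a) (phi d n b) = 0"
  unfolding phi_def ip_prod using assms by simp

definition Zp :: "nat \<Rightarrow> nat \<Rightarrow> nat \<Rightarrow> nat \<Rightarrow> bool" where
  "Zp d n a b \<longleftrightarrow> (\<exists>l\<in>{1..n}. lip d (phi_loc d n a l) (phi_loc d n b l) = 0)"

lemma Zp_sym: "Zp d n a b \<Longrightarrow> Zp d n b a"
  unfolding Zp_def by (subst lip_sym) auto

context
  fixes d n :: nat
  assumes d3: "d \<ge> 3" and n3: "n \<ge> 3"
begin

lemma Z_AA: "1 \<le> i \<Longrightarrow> i \<le> d-1 \<Longrightarrow> 1 \<le> j \<Longrightarrow> j \<le> d-1 \<Longrightarrow> i \<noteq> j \<Longrightarrow> Zp d n i j"
  unfolding Zp_def using n3 by (intro bexI[of _ n]) (auto simp: phi_loc_A V_kk)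

lemma n1: "n \<ge> 1" using n3 by simp
lemma d2: "d \<ge> 2" using d3 by simp

lemma Z_AB: "1 \<le> i \<Longrightarrow> i \<le> d-1 \<Longrightarrow> 1 \<le> j \<Longrightarrow> j \<le> d-1 \<Longrightarrow> 1 \<le> k \<Longrightarrow> k \<le> n-1 \<Longrightarrow>
   Zp d n i (j + k*(d-1))"
proof -
  assume a: "1 \<le> i" "i \<le> d-1" "1 \<le> j" "j \<le> d-1" "1 \<le> k" "k \<le> n-1"
  note B = phi_loc_B[OF a(5) a(6) a(3) a(4)]
  show ?thesis
  proof (cases "k = n - 1")
    case True
    then show ?thesis unfolding Zp_def B using a n3
      by (intro bexI[of _ "n-1"]) (auto simp: phi_loc_A V_kk)
  next
    case False
    then show ?thesis unfolding Zp_def B using a n3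
      by (intro bexI[of _ "n"]) (auto simp: phi_loc_A V_kk)
  qed
qed

lemma Z_AS: "1 \<le> i \<Longrightarrow> i \<le> d-1 \<Longrightarrow> Zp d n i (n*(d-1)+1)"
  unfolding Zp_def phi_loc_S[OF d2 n1] using n3 d3 by (intro bexI[of _ 1]) (auto simp: phi_loc_A V_mu)

lemma Z_BS: "1 \<le> i \<Longrightarrow> i \<le> d-1 \<Longrightarrow> 1 \<le> k \<Longrightarrow> k \<le> n-1 \<Longrightarrow> Zp d n (i + k*(d-1)) (n*(d-1)+1)"
proof -
  assume a: "1 \<le> i" "i \<le> d-1" "1 \<le> k" "k \<le> n-1"
  show ?thesis
    unfolding Zp_def phi_loc_S[OF d2 n1] phi_loc_B[OF a(3) a(4) a(1) a(2)] using a n3 d3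
    by (intro bexI[of _ "k+1"]) (auto simp: V_mu)
qed

lemma Z_BB: "1 \<le> i \<Longrightarrow> i \<le> d-1 \<Longrightarrow> 1 \<le> k \<Longrightarrow> k \<le> n-1 \<Longrightarrow>
   1 \<le> j \<Longrightarrow> j \<le> d-1 \<Longrightarrow> 1 \<le> k' \<Longrightarrow> k' \<le> n-1 \<Longrightarrow> k \<le> k' \<Longrightarrow>
   i + k*(d-1) \<noteq> j + k'*(d-1) \<Longrightarrow> Zp d n (i + k*(d-1)) (j + k'*(d-1))"
proof -
  assume a: "1 \<le> i" "i \<le> d-1" "1 \<le> k" "k \<le> n-1" "1 \<le> j" "j \<le> d-1" "1 \<le> k'" "k' \<le> n-1" "k \<le> k'"
     "i + k*(d-1) \<noteq> j + k'*(d-1)"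
  show ?thesis unfolding Zp_def phi_loc_B[OF a(3) a(4) a(1) a(2)] phi_loc_B[OF a(7) a(8) a(5) a(6)]
    using a n3 d3
    by (intro bexI[of _ k]) (auto simp: V_kk)
qed

lemma orthZ: assumes "a \<in> {1..n*(d-1)+1}" "b \<in> {1..n*(d-1)+1}" "a \<noteq> b" shows "Zp d n a b"
proof -
  have d2: "d \<ge> 2" using d3 by simp
  from classify[OF d2 assms(1)] classify[OF d2 assms(2)] show ?thesis
  proof (elim disjE exE conjE)
    fix k i k' j
    assume a: "1 \<le> k" "k \<le> n-1" "1 \<le> i" "i \<le> d-1" "a = i + k*(d-1)"
       "1 \<le> k'" "k' \<le> n-1" "1 \<le> j" "j \<le> d-1" "b = j + k'*(d-1)"
    show ?thesis
    proof (cases "k \<le> k'")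
      case True then show ?thesis using a assms(3) Z_BB by simp
    next
      case False then show ?thesis using a assms(3) Z_BB[of j k' i k] Zp_sym by simp
    qed
  qed (use assms(3) Z_AA Z_AB Z_AS Z_BS Zp_sym in auto)
qed


lemma rA: "1 \<le> i \<Longrightarrow> i \<le> d-1 \<Longrightarrow> i \<in> {1..n*(d-1)+1}"
proof -
  assume a: "1 \<le> i" "i \<le> d-1"
  have "1*(d-1) \<le> n*(d-1)" using n3 by (intro mult_le_mono1) simp
  then have "i \<le> n*(d-1)+1" using a by linarith
  then show ?thesis using a by simp
qed

lemma rB: "1 \<le> i \<Longrightarrow> i \<le> d-1 \<Longrightarrow> 1 \<le> k \<Longrightarrow> k \<le> n-1 \<Longrightarrow> i + k*(d-1) \<in> {1..n*(d-1)+1}"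
proof -
  assume a: "1 \<le> i" "i \<le> d-1" "1 \<le> k" "k \<le> n-1"
  have "i + k*(d-1) \<le> (k+1)*(d-1)" using a by simp
  also have "\<dots> \<le> n*(d-1)" using a by (intro mult_le_mono1) simp
  finally show ?thesis using a by simp
qed

lemma rS: "n*(d-1)+1 \<in> {1..n*(d-1)+1}" by simp

lemma key: assumes "orth_preserving d n t E" "t \<in> {1..n}" "a \<in> {1..n*(d-1)+1}" "b \<in> {1..n*(d-1)+1}" "a \<noteq> b"
  "\<forall>l\<in>{1..n}-{t}. lip d (phi_loc d n a l) (phi_loc d n b l) \<noteq> 0"
  shows "melt d E (phi_loc d n a t) (phi_loc d n b t) = 0"
proof -
  have "ip d n (phi d n a) (loc_op d t E (phi d n b)) = 0" using assms(1,3,4,5) unfolding orth_preserving_def by blast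
  then have "(\<Prod>l\<in>{1..n}-{t}. lip d (phi_loc d n a l) (phi_loc d n b l)) * melt d E (phi_loc d n a t) (phi_loc d n b t) = 0"
    unfolding phi_def ip_loc[OF assms(2)] .
  moreover have "(\<Prod>l\<in>{1..n}-{t}. lip d (phi_loc d n a l) (phi_loc d n b l)) \<noteq> 0"
    using assms(6) by simp
  ultimately show ?thesis by simp
qed

lemma F1: assumes op: "orth_preserving d n t E" and t: "t \<in> {1..n}"
  and a: "1 \<le> i" "i \<le> d-1" "1 \<le> j" "j \<le> d-1" "i \<noteq> j"
  shows "E i j = 0"
proof (cases "t \<le> n - 1")
  case True
  have t1: "1 \<le> t" using t by simp
  note Bi = phi_loc_B[OF t1 True a(1) a(2)] and Bj = phi_loc_B[OF t1 True a(3) a(4)]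
  have "melt d E (phi_loc d n (i + t*(d-1)) t) (phi_loc d n (j + t*(d-1)) t) = 0"
  proof (rule key[OF op t rB[OF a(1) a(2) t1 True] rB[OF a(3) a(4) t1 True]])
    show "i + t * (d - 1) \<noteq> j + t * (d - 1)" using a by simp
    show "\<forall>l\<in>{1..n} - {t}. lip d (phi_loc d n (i + t * (d - 1)) l) (phi_loc d n (j + t * (d - 1)) l) \<noteq> 0"
      unfolding Bi Bj using a by (auto simp: V_kk V_mm)
  qed
  then show ?thesis unfolding Bi Bj using a by (simp add: melt_kk)
next
  case False
  then have tn: "t = n" using t by simp
  have "melt d E (phi_loc d n i t) (phi_loc d n j t) = 0"
  proof (rule key[OF op t rA[OF a(1) a(2)] rA[OF a(3) a(4)]])
    show "i \<noteq> j" by fact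
    show "\<forall>l\<in>{1..n} - {t}. lip d (phi_loc d n i l) (phi_loc d n j l) \<noteq> 0"
      unfolding phi_loc_A[OF a(1) a(2)] phi_loc_A[OF a(3) a(4)] using a tn by (auto simp: V_kk V_mm)
  qed
  then show ?thesis unfolding phi_loc_A[OF a(1) a(2)] phi_loc_A[OF a(3) a(4)] using a tn n3
    by (simp add: melt_kk)
qed

lemma F2: assumes op: "orth_preserving d n t E" and t: "t \<in> {1..n}"
  and a: "1 \<le> j" "j \<le> d-1"
  shows "E j 0 = 0"
proof -
  have s2: "complex_of_real (sqrt 2) \<noteq> 0" by simp
  have "t \<le> n - 2 \<or> t = n - 1 \<or> t = n" using t by auto
  then consider "t \<le> n - 2" | "t = n - 1" | "t = n" by blast
  then show ?thesis
  proof cases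
    case 1
    have t1: "1 \<le> t" "t \<le> n - 1" "1 \<le> t + 1" "t + 1 \<le> n - 1" using t 1 n3 by auto
    note Bj = phi_loc_B[OF t1(1) t1(2) a(1) a(2)] and Bj' = phi_loc_B[OF t1(3) t1(4) a(1) a(2)]
    have "melt d E (phi_loc d n (j + t*(d-1)) t) (phi_loc d n (j + (t+1)*(d-1)) t) = 0"
    proof (rule key[OF op t rB[OF a(1) a(2) t1(1) t1(2)] rB[OF a(1) a(2) t1(3) t1(4)]])
      have "d - 1 > 0" using a by simp
      then show "j + t * (d - 1) \<noteq> j + (t+1) * (d - 1)" by simp
      show "\<forall>l\<in>{1..n} - {t}. lip d (phi_loc d n (j + t * (d - 1)) l) (phi_loc d n (j + (t+1) * (d - 1)) l) \<noteq> 0"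
        unfolding Bj Bj' using a by (auto simp: V_kk V_mk V_km)
    qed
    then show ?thesis unfolding Bj Bj' using a by (simp add: melt_kk)
  next
    case 2
    have t1: "1 \<le> t" "t \<le> n - 1" using t 2 n3 by auto
    note Bj = phi_loc_B[OF t1(1) t1(2) a(1) a(2)] and Aj = phi_loc_A[OF a(1) a(2)]
    have "melt d E (phi_loc d n (j + t*(d-1)) t) (phi_loc d n j t) = 0"
    proof (rule key[OF op t rB[OF a(1) a(2) t1(1) t1(2)] rA[OF a(1) a(2)]])
      have "1*(d-1) \<le> t*(d-1)" using t1 by (intro mult_le_mono1) simp
      then show "j + t * (d - 1) \<noteq> j" using a by linarith
      show "\<forall>l\<in>{1..n} - {t}. lip d (phi_loc d n (j + t * (d - 1)) l) (phi_loc d n j l) \<noteq> 0"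
        unfolding Bj Aj using a 2 n3 by (auto simp: V_kk V_mk V_km)
    qed
    moreover have "t \<noteq> 1" "t \<noteq> n" using 2 n3 by auto
    ultimately show ?thesis unfolding Bj Aj using a by (simp add: melt_kk)
  next
    case 3
    have o: "1 \<le> (1::nat)" "1 \<le> n - 1" using n3 by auto
    note Bj = phi_loc_B[OF o(1) o(2) a(1) a(2)] and Aj = phi_loc_A[OF a(1) a(2)]
    have "melt d E (phi_loc d n j t) (phi_loc d n (j + 1*(d-1)) t) = 0"
    proof (rule key[OF op t rA[OF a(1) a(2)] rB[OF a(1) a(2) o(1) o(2)]])
      show "j \<noteq> j + 1 * (d - 1)" using a by simp
      show "\<forall>l\<in>{1..n} - {t}. lip d (phi_loc d n j l) (phi_loc d n (j + 1 * (d - 1)) l) \<noteq> 0"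
        unfolding Bj Aj using a 3 n3 by (auto simp: V_kk V_mk V_km)
    qed
    then show ?thesis unfolding Bj Aj using a 3 n3 by (simp add: melt_kk)
  qed
qed

lemma F3: assumes op: "orth_preserving d n t E" and t: "t \<in> {1..n}"
  and a: "1 \<le> j" "j \<le> d-1"
  shows "(\<Sum>p<d. E p 0 - E p j) = 0"
proof -
  note S = phi_loc_S[OF d2 n1]
  have nz: "complex_of_real (sqrt (real d)) * complex_of_real (sqrt 2) \<noteq> 0" using d3 by simp
  have "melt d E (ket_uniform d) (ket_minus j) = 0"
  proof (cases "t = 1")
    case True
    note Aj = phi_loc_A[OF a(1) a(2)]
    have "melt d E (phi_loc d n (n*(d-1)+1) t) (phi_loc d n j t) = 0"
    proof (rule key[OF op t rS rA[OF a(1) a(2)]])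
      have "1*(d-1) \<le> n*(d-1)" using n3 by (intro mult_le_mono1) simp
      then show "n * (d - 1) + 1 \<noteq> j" using a by linarith
      show "\<forall>l\<in>{1..n} - {t}. lip d (phi_loc d n (n * (d - 1) + 1) l) (phi_loc d n j l) \<noteq> 0"
        unfolding S Aj using a d3 True by (auto simp: V_uk)
    qed
    then show ?thesis unfolding S Aj using True by simp
  next
    case False
    have t1: "1 \<le> t - 1" "t - 1 \<le> n - 1" using t False by auto
    have tt: "t - 1 + 1 = t" using t False by auto
    note Bj = phi_loc_B[OF t1 a(1) a(2)]
    have "melt d E (phi_loc d n (n*(d-1)+1) t) (phi_loc d n (j + (t-1)*(d-1)) t) = 0"
    proof (rule key[OF op t rS rB[OF a(1) a(2) t1]])
      have "j + (t-1)*(d-1) \<le> (t-1+1)*(d-1)" using a by simp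
      also have "\<dots> \<le> n*(d-1)" using t1 by (intro mult_le_mono1) simp
      finally show "n * (d - 1) + 1 \<noteq> j + (t-1) * (d - 1)" by linarith
      show "\<forall>l\<in>{1..n} - {t}. lip d (phi_loc d n (n * (d - 1) + 1) l) (phi_loc d n (j + (t-1) * (d - 1)) l) \<noteq> 0"
        unfolding S Bj tt using a d3 by (auto simp: V_uk)
    qed
    moreover have "t \<noteq> t - 1" using t1 by simp
    ultimately show ?thesis unfolding S Bj tt by simp
  qed
  moreover have jd: "j < d" using a by simp
  ultimately show ?thesis unfolding melt_um[OF jd] using nz by simp
qed

end


theorem theorem1:
  fixes d n :: nat
  assumes "d \<ge> 3" and "n \<ge> 3"
  shows "(\<forall>a\<in>{1..n*(d-1)+1}. \<forall>b\<in>{1..n*(d-1)+1}. a \<noteq> b \<longrightarrow>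
            ip d n (phi d n a) (phi d n b) = 0)
       \<and> (\<forall>t\<in>{1..n}. \<forall>E. psd d E \<and> orth_preserving d n t E \<longrightarrow> prop_identity d E)"
proof (intro conjI ballI allI impI)
  fix a b assume "a \<in> {1..n*(d-1)+1}" "b \<in> {1..n*(d-1)+1}" "a \<noteq> b"
  then show "ip d n (phi d n a) (phi d n b) = 0"
    using ip_phi_zero orthZ[OF assms] unfolding Zp_def by blast
next
  fix t E assume t: "t \<in> {1..n}" and h: "psd d E \<and> orth_preserving d n t E"
  then have ps: "psd d E" and op: "orth_preserving d n t E" by auto
  have f1: "E i j = 0" if "1 \<le> i" "i \<le> d-1" "1 \<le> j" "j \<le> d-1" "i \<noteq> j" for i j
    using F1[OF assms op t that] .
  have f2: "E j 0 = 0" if "1 \<le> j" "j \<le> d-1" for j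
    using F2[OF assms op t that] .
  have f2': "E 0 j = 0" if "1 \<le> j" "j \<le> d-1" for j
  proof -
    have "E 0 j = cnj (E j 0)" using psd_herm[OF ps, of j 0] that assms by simp
    then show ?thesis using f2[OF that] by simp
  qed
  have diag: "E j j = E 0 0" if "1 \<le> j" "j \<le> d-1" for j
  proof -
    have "(\<Sum>p<d. E p 0 - E p j) = (\<Sum>p<d. (if p = 0 then E 0 0 else 0) - (if p = j then E j j else 0))"
    proof (rule sum.cong)
      fix p assume p: "p \<in> {..<d}"
      have "E p 0 = (if p = 0 then E 0 0 else 0)" using f2[of p] p by auto
      moreover have "E p j = (if p = j then E j j else 0)"
        using f1[of p j] f2'[of j] that p by (cases "p = 0") auto
      ultimately show "E p 0 - E p j = (if p = 0 then E 0 0 else 0) - (if p = j then E j j else 0)" by simp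
    qed simp
    also have "\<dots> = E 0 0 - E j j"
    proof -
      have "j < d" "0 < d" using that by auto
      then show ?thesis by (simp add: sum_subtractf)
    qed
    finally show ?thesis using F3[OF assms op t that] by simp
  qed
  show "prop_identity d E" unfolding prop_identity_def
  proof (intro exI[of _ "E 0 0"] allI impI)
    fix i k assume ik: "i < d" "k < d"
    show "E i k = (if i = k then E 0 0 else 0)"
    proof (cases "i = k")
      case True then show ?thesis using diag[of i] ik by (cases "i = 0") auto
    next
      case False
      then show ?thesis using f1[of i k] f2[of i] f2'[of k] ik by (cases "i = 0"; cases "k = 0") auto
    qed
  qed
qed

end
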